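(* Let $n,m,T\in\mathbb{N}$ and $u_{[0,T]}\in\mathbb{R}^{m(T+1)}$. Then the following are equivalent: (i) for every controllable pair $(A,B)\in\mathbb{R}^{n\times n}\times\mathbb{R}^{n\times m}$ and every state sequence $x_{[0,T]}$ satisfying $x(t+1)=Ax(t)+Bu(t)$ for all $t\in[0,T-1]$, the matrix $\mathcal{H}_1(x_{[0,T]})=\begin{bmatrix}x(0)&\cdots&x(T)\end{bmatrix}$ has full row rank $n$; (ii) $u_{[0,T-1]}$ is persistently exciting of order $n$.
   Context: For $v:\mathbb{Z}_+\to\mathbb{R}^q$, $v_{[0,T-1]}=\begin{bmatrix}v(0)^\top & \cdots & v(T-1)^\top\end{bmatrix}^\top$. For $k\in[1,T]$ the Hankel matrix of depth $k$ is the $qk\times(T-k+1)$ block matrix $\mathcal{H}_k(v_{[0,T-1]})$ whose $(i,j)$ block ($i\in[0,k-1]$, $j\in[0,T-k]$) is $v(i+j)$. The sequence $v_{[0,T-1]}$ is persistently exciting of order $k$ if $k\le T$ and $\mathcal{H}_k(v_{[0,T-1]})$ has full row rank (if $k>T$ it is not persistently exciting of order $k$). *)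

theory Defs
  imports "Jordan_Normal_Form.DL_Rank"
begin

text \<open>Block Hankel matrix of depth k of the finite sequence v(0),...,v(len-1),
  where each v(i) is a vector in R^q: a (q*k) x (len-k+1) matrix whose (i,j) block
  (i in [0,k-1], j in [0,len-k]) is v(i+j).\<close>
definition hankel :: "nat \<Rightarrow> nat \<Rightarrow> nat \<Rightarrow> (nat \<Rightarrow> real vec) \<Rightarrow> real mat" where
  "hankel q k len v = mat (q * k) (len + 1 - k) (\<lambda>(i, j). v (i div q + j) $ (i mod q))"

definition full_row_rank :: "real mat \<Rightarrow> bool" where
  "full_row_rank M \<longleftrightarrow> vec_space.rank (dim_row M) M = dim_row M"

definition persistently_exciting :: "nat \<Rightarrow> nat \<Rightarrow> (nat \<Rightarrow> real vec) \<Rightarrow> nat \<Rightarrow> bool" where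
  "persistently_exciting q len v k \<longleftrightarrow> k \<le> len \<and> full_row_rank (hankel q k len v)"

definition ctrb_mat :: "nat \<Rightarrow> nat \<Rightarrow> real mat \<Rightarrow> real mat \<Rightarrow> real mat" where
  "ctrb_mat n m A B = mat n (n * m) (\<lambda>(i, j). ((A ^\<^sub>m (j div m)) * B) $$ (i, j mod m))"

definition controllable :: "nat \<Rightarrow> nat \<Rightarrow> real mat \<Rightarrow> real mat \<Rightarrow> bool" where
  "controllable n m A B \<longleftrightarrow> vec_space.rank n (ctrb_mat n m A B) = n"

end

theory Submission
  imports Defs "HOL-Computational_Algebra.Polynomial"
begin

context vec_space begin

lemma rank_full_span:
  assumes M: "M \<in> carrier_mat n c" and r: "rank M = n"
  shows "span (set (cols M)) = carrier_vec n"
proof -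
  have fin: "finite (set (cols M))" by simp
  obtain S where S: "maximal S (\<lambda>T. T \<subseteq> set (cols M) \<and> lin_indpt T)"
    using maximal_exists[of "(\<lambda>T. T \<subseteq> set (cols M) \<and> lin_indpt T)" "card (set (cols M))" "{}"]
    by (meson List.finite_set card_mono empty_iff empty_subsetI finite_lin_indpt2 rev_finite_subset)
  have cS: "card S = n" using rank_card_indpt[OF M S] r by simp
  have Ssub: "S \<subseteq> set (cols M)" and li: "lin_indpt S" using S unfolding maximal_def by auto
  have colsC: "set (cols M) \<subseteq> carrier_vec n" using M cols_dim by blast
  have finS: "finite S" using Ssub fin finite_subset by blast
  have "basis S"
    by (rule dim_li_is_basis) (use finS Ssub colsC li cS dim_is_n in auto)
  then have "span S = carrier_vec n" unfolding basis_def by auto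
  moreover have "span S \<subseteq> span (set (cols M))" using span_is_monotone Ssub by auto
  moreover have "span (set (cols M)) \<subseteq> carrier_vec n" using span_is_subset2 colsC by auto
  ultimately show ?thesis by auto
qed

lemma span_full_rank:
  assumes M: "M \<in> carrier_mat n c" and s: "span (set (cols M)) = carrier_vec n"
  shows "rank M = n"
proof -
  have "span_vs (set (cols M)) = V" using s by simp
  then show ?thesis unfolding rank_def using dim_is_n by simp
qed

end

lemma real_self_prod_zero:
  fixes v :: "real vec"
  assumes "v \<bullet> v = 0" "v \<in> carrier_vec n"
  shows "v = 0\<^sub>v n"
proof -
  have "(\<Sum>i\<in>{0..<n}. v $ i * v $ i) = 0" using assms unfolding scalar_prod_def by auto
  then have "\<forall>i\<in>{0..<n}. v $ i * v $ i = 0"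
    by (subst (asm) sum_nonneg_eq_0_iff) auto
  then show ?thesis using assms(2) by (intro eq_vecI) auto
qed

lemma full_rank_iff:
  fixes M :: "real mat"
  assumes M: "M \<in> carrier_mat n c"
  shows "vec_space.rank n M = n \<longleftrightarrow> (\<forall>v\<in>carrier_vec n. transpose_mat M *\<^sub>v v = 0\<^sub>v c \<longrightarrow> v = 0\<^sub>v n)"
proof -
  interpret vec_space "TYPE(real)" n .
  have cs: "\<And>A nc. A \<in> carrier_mat n nc \<Longrightarrow> span (set (cols A)) = {y\<in>carrier_vec n. \<exists>x\<in>carrier_vec nc. A *\<^sub>v x = y}"
    using col_space_eq unfolding col_space_def by auto
  show ?thesis
  proof
    assume r: "rank M = n"
    show "\<forall>v\<in>carrier_vec n. transpose_mat M *\<^sub>v v = 0\<^sub>v c \<longrightarrow> v = 0\<^sub>v n"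
    proof (intro ballI impI)
      fix v :: "real vec" assume v: "v \<in> carrier_vec n" and z: "transpose_mat M *\<^sub>v v = 0\<^sub>v c"
      have "v \<in> span (set (cols M))" using rank_full_span[OF M r] v by auto
      then obtain x where x: "x \<in> carrier_vec c" "M *\<^sub>v x = v" using cs[OF M] by auto
      have "v \<bullet> v = (transpose_mat M *\<^sub>v v) \<bullet> x"
        using transpose_vec_mult_scalar[OF M x(1) v] x(2) by simp
      also have "\<dots> = 0" using z x by simp
      finally show "v = 0\<^sub>v n" using real_self_prod_zero v by blast
    qed
  next
    assume K: "\<forall>v\<in>carrier_vec n. transpose_mat M *\<^sub>v v = 0\<^sub>v c \<longrightarrow> v = 0\<^sub>v n"
    define G where "G = M * transpose_mat M"
    have G: "G \<in> carrier_mat n n" using M unfolding G_def by auto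
    have "det G \<noteq> 0"
    proof
      assume "det G = 0"
      then obtain v where v: "v \<in> carrier_vec n" "v \<noteq> 0\<^sub>v n" "G *\<^sub>v v = 0\<^sub>v n"
        using det_0_iff_vec_prod_zero_field[OF G] by auto
      define w where "w = transpose_mat M *\<^sub>v v"
      have w: "w \<in> carrier_vec c" using M v unfolding w_def by auto
      have "w \<bullet> w = v \<bullet> (M *\<^sub>v w)"
        using transpose_vec_mult_scalar[OF M w v(1)] unfolding w_def by simp
      also have "M *\<^sub>v w = G *\<^sub>v v" unfolding w_def G_def using M v by auto
      finally have "w \<bullet> w = 0" using v by simp
      then have "w = 0\<^sub>v c" using real_self_prod_zero w by blast
      then show False using K v unfolding w_def by auto
    qed
    then have "rank G = n" using det_rank_iff[OF G] by auto
    then have sG: "span (set (cols G)) = carrier_vec n" using rank_full_span[OF G] by auto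
    have "span (set (cols M)) = carrier_vec n"
    proof
      show "span (set (cols M)) \<subseteq> carrier_vec n" using cs[OF M] by auto
      show "carrier_vec n \<subseteq> span (set (cols M))"
      proof
        fix y :: "real vec" assume y: "y \<in> carrier_vec n"
        then obtain z where z: "z \<in> carrier_vec n" "G *\<^sub>v z = y" using sG cs[OF G] by auto
        have "M *\<^sub>v (transpose_mat M *\<^sub>v z) = y" using z M unfolding G_def by auto
        then show "y \<in> span (set (cols M))" using cs[OF M] y z M by fastforce
      qed
    qed
    then show "rank M = n" using span_full_rank[OF M] by auto
  qed
qed

lemma full_row_rank_mat:
  "full_row_rank (mat r c f) \<longleftrightarrow>
    (\<forall>v\<in>carrier_vec r. (\<forall>j<c. (\<Sum>i<r. v $ i * f (i, j)) = 0) \<longrightarrow> v = 0\<^sub>v r)"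
proof -
  have M: "mat r c f \<in> carrier_mat r c" by auto
  have eq: "transpose_mat (mat r c f) *\<^sub>v v = 0\<^sub>v c \<longleftrightarrow> (\<forall>j<c. (\<Sum>i<r. v $ i * f (i, j)) = 0)"
    if v: "v \<in> carrier_vec r" for v
  proof -
    have "(transpose_mat (mat r c f) *\<^sub>v v) $ j = (\<Sum>i<r. v $ i * f (i, j))" if "j < c" for j
      using that v unfolding mult_mat_vec_def scalar_prod_def
      by (auto simp: lessThan_atLeast0 intro!: sum.cong)
    then show ?thesis
      by (auto simp: vec_eq_iff)
  qed
  show ?thesis unfolding full_row_rank_def using full_rank_iff[OF M] eq by auto
qed

lemma hankel_x_rank:
  assumes x: "\<forall>t\<le>T. x t \<in> carrier_vec n"
  shows "full_row_rank (hankel n 1 (T+1) x) \<longleftrightarrow>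
    (\<forall>\<xi>\<in>carrier_vec n. (\<forall>t\<le>T. \<xi> \<bullet> x t = 0) \<longrightarrow> \<xi> = 0\<^sub>v n)"
proof -
  have h: "hankel n 1 (T+1) x = mat n (Suc T) (\<lambda>(i,j). x j $ i)"
    unfolding hankel_def by (intro eq_matI) auto
  have e: "(\<Sum>i<n. \<xi> $ i * x j $ i) = \<xi> \<bullet> x j" if "j < Suc T" "\<xi> \<in> carrier_vec n" for \<xi> j
  proof -
    have "x j \<in> carrier_vec n" using x that by (auto simp: less_Suc_eq_le)
    then show ?thesis unfolding scalar_prod_def by (auto simp: lessThan_atLeast0)
  qed
  show ?thesis unfolding h full_row_rank_mat using e
    by (auto simp: less_Suc_eq_le)
qed

lemma pe_iff:
  "persistently_exciting m T u n \<longleftrightarrow> n \<le> T \<and>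
    (\<forall>\<eta>\<in>carrier_vec (m*n). (\<forall>j\<le>T-n. (\<Sum>i<m*n. \<eta> $ i * u (i div m + j) $ (i mod m)) = 0) \<longrightarrow> \<eta> = 0\<^sub>v (m*n))"
proof -
  have h: "hankel m n T u = mat (m*n) (T+1-n) (\<lambda>(i,j). u (i div m + j) $ (i mod m))"
    unfolding hankel_def ..
  show ?thesis
  proof (cases "n \<le> T")
    case True
    then have e: "(j < T+1-n) = (j \<le> T-n)" for j by auto
    show ?thesis unfolding persistently_exciting_def full_row_rank_mat h e using True by simp
  qed (simp add: persistently_exciting_def)
qed

lemma sum_div_mod_reindex:
  fixes f :: "nat \<Rightarrow> nat \<Rightarrow> real"
  shows "(\<Sum>i'<m*n. f (i' div m) (i' mod m)) = (\<Sum>i<n. \<Sum>p<m. f i p)"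
proof (induction n)
  case 0 then show ?case by simp
next
  case (Suc n)
  have "(\<Sum>i'<m*Suc n. f (i' div m) (i' mod m)) = (\<Sum>i'<m*n. f (i' div m) (i' mod m)) + (\<Sum>i'\<in>{m*n..<m*n+m}. f (i' div m) (i' mod m))"
    by (simp add: sum.atLeastLessThan_concat[symmetric] lessThan_atLeast0 algebra_simps)
  also have "(\<Sum>i'\<in>{m*n..<m*n+m}. f (i' div m) (i' mod m)) = (\<Sum>p<m. f n p)"
  proof -
    have "(\<Sum>i'\<in>{m*n..<m*n+m}. f (i' div m) (i' mod m)) = (\<Sum>p\<in>{0..<m}. f ((p + m*n) div m) ((p + m*n) mod m))"
      using sum.shift_bounds_nat_ivl[of "\<lambda>i'. f (i' div m) (i' mod m)" 0 "m*n" m] by (simp add: add.commute)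
    also have "\<dots> = (\<Sum>p<m. f n p)" by (intro sum.cong) (auto simp: lessThan_atLeast0)
    finally show ?thesis .
  qed
  finally show ?case using Suc by simp
qed

lemma sum_triangle_swap:
  fixes f :: "nat \<Rightarrow> nat \<Rightarrow> real"
  shows "(\<Sum>k<Suc n. \<Sum>i<k. f k i) = (\<Sum>i<n. \<Sum>k\<in>{Suc i..n}. f k i)"
proof (induction n)
  case 0 then show ?case by simp
next
  case (Suc n)
  have "(\<Sum>k<Suc (Suc n). \<Sum>i<k. f k i) = (\<Sum>i<n. \<Sum>k\<in>{Suc i..n}. f k i) + (\<Sum>i<Suc n. f (Suc n) i)"
    using Suc by simp
  also have "\<dots> = (\<Sum>i<n. (\<Sum>k\<in>{Suc i..n}. f k i) + f (Suc n) i) + f (Suc n) n"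
    by (simp add: sum.distrib)
  also have "\<dots> = (\<Sum>i<n. \<Sum>k\<in>{Suc i..Suc n}. f k i) + f (Suc n) n"
    by (intro arg_cong2[where f="(+)"] sum.cong) auto
  also have "\<dots> = (\<Sum>i<Suc n. \<Sum>k\<in>{Suc i..Suc n}. f k i)" by simp
  finally show ?case .
qed

lemma ctrb_iff:
  assumes A: "A \<in> carrier_mat n n" and B: "B \<in> carrier_mat n m"
  shows "controllable n m A B \<longleftrightarrow> (\<forall>\<xi>\<in>carrier_vec n.
     (\<forall>k<n. \<forall>p<m. (\<Sum>i<n. \<xi> $ i * (A ^\<^sub>m k * B) $$ (i, p)) = 0) \<longrightarrow> \<xi> = 0\<^sub>v n)"
proof -
  have c: "controllable n m A B \<longleftrightarrow> full_row_rank (ctrb_mat n m A B)"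
    unfolding controllable_def full_row_rank_def ctrb_mat_def by simp
  have e: "(\<forall>j<n*m. (\<Sum>i<n. \<xi> $ i * (case (i, j) of (i, j) \<Rightarrow> (A ^\<^sub>m (j div m) * B) $$ (i, j mod m))) = 0)
     \<longleftrightarrow> (\<forall>k<n. \<forall>p<m. (\<Sum>i<n. \<xi> $ i * (A ^\<^sub>m k * B) $$ (i, p)) = 0)" for \<xi> :: "real vec"
  proof
    assume H: "\<forall>j<n*m. (\<Sum>i<n. \<xi> $ i * (case (i, j) of (i, j) \<Rightarrow> (A ^\<^sub>m (j div m) * B) $$ (i, j mod m))) = 0"
    show "\<forall>k<n. \<forall>p<m. (\<Sum>i<n. \<xi> $ i * (A ^\<^sub>m k * B) $$ (i, p)) = 0"
    proof (intro allI impI)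
      fix k p assume k: "k < n" and p: "p < m"
      have j: "k*m + p < n*m"
      proof -
        have "k*m + p < k*m + m" using p by simp
        also have "\<dots> = Suc k * m" by simp
        also have "\<dots> \<le> n*m" using k by (intro mult_right_mono) auto
        finally show ?thesis .
      qed
      have "(k*m+p) div m = k" "(k*m+p) mod m = p" using p by auto
      then show "(\<Sum>i<n. \<xi> $ i * (A ^\<^sub>m k * B) $$ (i, p)) = 0" using H[rule_format, OF j] by simp
    qed
  next
    assume H: "\<forall>k<n. \<forall>p<m. (\<Sum>i<n. \<xi> $ i * (A ^\<^sub>m k * B) $$ (i, p)) = 0"
    show "\<forall>j<n*m. (\<Sum>i<n. \<xi> $ i * (case (i, j) of (i, j) \<Rightarrow> (A ^\<^sub>m (j div m) * B) $$ (i, j mod m))) = 0"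
    proof (intro allI impI)
      fix j assume j: "j < n*m"
      then have m: "m > 0" by (cases m) auto
      have "j div m < n" using j m by (simp add: div_less_iff_less_mult mult.commute)
      moreover have "j mod m < m" using m by simp
      ultimately show "(\<Sum>i<n. \<xi> $ i * (case (i, j) of (i, j) \<Rightarrow> (A ^\<^sub>m (j div m) * B) $$ (i, j mod m))) = 0"
        using H by simp
    qed
  qed
  show ?thesis unfolding c ctrb_mat_def full_row_rank_mat e ..
qed

lemma forward:
  fixes A B :: "real mat" and x u :: "nat \<Rightarrow> real vec"
  assumes A: "A \<in> carrier_mat n n" and B: "B \<in> carrier_mat n m"
    and ctrl: "controllable n m A B"
    and x: "\<forall>t\<le>T. x t \<in> carrier_vec n"
    and dyn: "\<forall>t<T. x (Suc t) = A *\<^sub>v x t + B *\<^sub>v u t"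
    and u: "\<forall>t\<le>T. u t \<in> carrier_vec m"
    and pe: "persistently_exciting m T u n"
  shows "full_row_rank (hankel n 1 (T+1) x)"
  unfolding hankel_x_rank[OF x]
proof (intro ballI impI)
  fix \<xi> :: "real vec" assume \<xi>: "\<xi> \<in> carrier_vec n" and orth: "\<forall>t\<le>T. \<xi> \<bullet> x t = 0"
  have nT: "n \<le> T" and peK: "\<forall>\<eta>\<in>carrier_vec (m*n). (\<forall>j\<le>T-n. (\<Sum>i<m*n. \<eta> $ i * u (i div m + j) $ (i mod m)) = 0) \<longrightarrow> \<eta> = 0\<^sub>v (m*n)"
    using pe unfolding pe_iff by auto
  define z where "z k i = (\<Sum>i'<n. (A ^\<^sub>m k) $$ (i', i) * \<xi> $ i')" for k i
  define h where "h l p = (\<Sum>i<n. z l i * B $$ (i, p))" for l p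
  have z0: "z 0 i = \<xi> $ i" if "i < n" for i
  proof -
    have "z 0 i = (\<Sum>i'<n. if i' = i then \<xi> $ i' else 0)"
      unfolding z_def using that A by (intro sum.cong) auto
    also have "\<dots> = \<xi> $ i" using that by (simp add: sum.delta)
    finally show ?thesis .
  qed
  have zS: "z (Suc k) i = (\<Sum>q<n. A $$ (q, i) * z k q)" if "i < n" for k i
  proof -
    have Ak: "A ^\<^sub>m k \<in> carrier_mat n n" using A by simp
    have "z (Suc k) i = (\<Sum>i'<n. (\<Sum>q<n. (A ^\<^sub>m k) $$ (i', q) * A $$ (q, i)) * \<xi> $ i')"
      unfolding z_def using that Ak A
      by (intro sum.cong) (auto simp: scalar_prod_def lessThan_atLeast0)
    also have "\<dots> = (\<Sum>i'<n. \<Sum>q<n. (A ^\<^sub>m k) $$ (i', q) * A $$ (q, i) * \<xi> $ i')"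
      by (simp add: sum_distrib_right)
    also have "\<dots> = (\<Sum>q<n. \<Sum>i'<n. (A ^\<^sub>m k) $$ (i', q) * A $$ (q, i) * \<xi> $ i')"
      by (rule sum.swap)
    also have "\<dots> = (\<Sum>q<n. A $$ (q, i) * z k q)"
      unfolding z_def by (simp add: sum_distrib_left algebra_simps)
    finally show ?thesis .
  qed
  have ctrl_eq: "(\<Sum>i<n. \<xi> $ i * (A ^\<^sub>m k * B) $$ (i, p)) = h k p" if "p < m" for k p
  proof -
    have Ak: "A ^\<^sub>m k \<in> carrier_mat n n" using A by simp
    have "(\<Sum>i<n. \<xi> $ i * (A ^\<^sub>m k * B) $$ (i, p)) = (\<Sum>i<n. \<xi> $ i * (\<Sum>q<n. (A ^\<^sub>m k) $$ (i, q) * B $$ (q, p)))"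
      using that Ak B by (intro sum.cong) (auto simp: scalar_prod_def lessThan_atLeast0 carrier_matD[OF A] carrier_matD[OF B])
    also have "\<dots> = (\<Sum>i<n. \<Sum>q<n. \<xi> $ i * (A ^\<^sub>m k) $$ (i, q) * B $$ (q, p))"
      by (simp add: sum_distrib_left algebra_simps)
    also have "\<dots> = (\<Sum>q<n. \<Sum>i<n. \<xi> $ i * (A ^\<^sub>m k) $$ (i, q) * B $$ (q, p))"
      by (rule sum.swap)
    also have "\<dots> = h k p"
      unfolding h_def z_def by (simp add: sum_distrib_right sum_distrib_left algebra_simps)
    finally show ?thesis .
  qed
  have L1: "\<xi> \<bullet> x (j+k) = (\<Sum>i<n. z k i * x j $ i) + (\<Sum>i<k. \<Sum>p<m. h (k-1-i) p * u (j+i) $ p)"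
    if "j + k \<le> T" for j k
    using that
  proof (induction k arbitrary: j)
    case 0
    have "x j \<in> carrier_vec n" using x 0 by simp
    then show ?case using z0 unfolding scalar_prod_def by (simp add: lessThan_atLeast0 mult.commute)
  next
    case (Suc k)
    have jT: "j < T" using Suc.prems by simp
    have xj: "x j \<in> carrier_vec n" using x jT by simp
    have uj: "u j \<in> carrier_vec m" using u jT by simp
    have IH: "\<xi> \<bullet> x (Suc j + k) = (\<Sum>i<n. z k i * x (Suc j) $ i) + (\<Sum>i<k. \<Sum>p<m. h (k-1-i) p * u (Suc j+i) $ p)"
      using Suc.IH[of "Suc j"] Suc.prems by simp
    have xS: "x (Suc j) $ i = (\<Sum>q<n. A $$ (i, q) * x j $ q) + (\<Sum>p<m. B $$ (i, p) * u j $ p)" if "i < n" for i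
      using dyn jT that xj uj A B
      by (simp add: scalar_prod_def lessThan_atLeast0 carrier_matD[OF A] carrier_matD[OF B])
    have "(\<Sum>i<n. z k i * x (Suc j) $ i) = (\<Sum>i<n. z k i * (\<Sum>q<n. A $$ (i, q) * x j $ q)) + (\<Sum>i<n. z k i * (\<Sum>p<m. B $$ (i, p) * u j $ p))"
      using xS by (simp add: sum.distrib distrib_left)
    also have "(\<Sum>i<n. z k i * (\<Sum>q<n. A $$ (i, q) * x j $ q)) = (\<Sum>q<n. z (Suc k) q * x j $ q)"
    proof -
      have "(\<Sum>i<n. z k i * (\<Sum>q<n. A $$ (i, q) * x j $ q)) = (\<Sum>i<n. \<Sum>q<n. z k i * A $$ (i, q) * x j $ q)"
        by (simp add: sum_distrib_left algebra_simps)
      also have "\<dots> = (\<Sum>q<n. \<Sum>i<n. z k i * A $$ (i, q) * x j $ q)" by (rule sum.swap)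
      also have "\<dots> = (\<Sum>q<n. z (Suc k) q * x j $ q)"
      proof (intro sum.cong refl)
        fix q assume "q \<in> {..<n}"
        then have "z (Suc k) q * x j $ q = (\<Sum>i<n. A $$ (i, q) * z k i) * x j $ q" using zS by simp
        also have "\<dots> = (\<Sum>i<n. z k i * A $$ (i, q) * x j $ q)"
          unfolding sum_distrib_right by (simp add: ac_simps)
        finally show "(\<Sum>i<n. z k i * A $$ (i, q) * x j $ q) = z (Suc k) q * x j $ q" by simp
      qed
      finally show ?thesis .
    qed
    also have "(\<Sum>i<n. z k i * (\<Sum>p<m. B $$ (i, p) * u j $ p)) = (\<Sum>p<m. h k p * u j $ p)"
    proof -
      have "(\<Sum>i<n. z k i * (\<Sum>p<m. B $$ (i, p) * u j $ p)) = (\<Sum>i<n. \<Sum>p<m. z k i * B $$ (i, p) * u j $ p)"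
        by (simp add: sum_distrib_left algebra_simps)
      also have "\<dots> = (\<Sum>p<m. \<Sum>i<n. z k i * B $$ (i, p) * u j $ p)" by (rule sum.swap)
      also have "\<dots> = (\<Sum>p<m. h k p * u j $ p)"
        unfolding h_def by (simp add: sum_distrib_right)
      finally show ?thesis .
    qed
    finally have e1: "(\<Sum>i<n. z k i * x (Suc j) $ i) = (\<Sum>q<n. z (Suc k) q * x j $ q) + (\<Sum>p<m. h k p * u j $ p)" .
    have e2: "(\<Sum>i<Suc k. \<Sum>p<m. h (Suc k-1-i) p * u (j+i) $ p) = (\<Sum>p<m. h k p * u j $ p) + (\<Sum>i<k. \<Sum>p<m. h (k-1-i) p * u (Suc j+i) $ p)"
      by (subst sum.lessThan_Suc_shift) simp
    show ?case using IH e1 e2 by simp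
  qed
  obtain v where v: "v \<in> carrier_vec (Suc n)" "v \<noteq> 0\<^sub>v (Suc n)"
    and vdep: "\<forall>i<n. (\<Sum>k<Suc n. v $ k * z k i) = 0"
  proof -
    let ?M = "mat (Suc n) n (\<lambda>(k, i). z k i)"
    have "vec_space.rank (Suc n) ?M \<le> n"
      by (rule vec_space.rank_le_nc) auto
    then have "\<not> full_row_rank ?M" unfolding full_row_rank_def by simp
    then show ?thesis using that unfolding full_row_rank_mat by auto
  qed
  define d where "d = Max {k. k < Suc n \<and> v $ k \<noteq> 0}"
  have "\<exists>k<Suc n. v $ k \<noteq> 0"
  proof (rule ccontr)
    assume "\<not> ?thesis"
    then have "v = 0\<^sub>v (Suc n)" using v(1) by (intro eq_vecI) auto
    then show False using v(2) by simp
  qed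
  then have dmem: "d < Suc n \<and> v $ d \<noteq> 0" and dmax: "\<And>k. k < Suc n \<Longrightarrow> v $ k \<noteq> 0 \<Longrightarrow> k \<le> d"
    unfolding d_def using Max_in[of "{k. k < Suc n \<and> v $ k \<noteq> 0}"] Max_ge[of "{k. k < Suc n \<and> v $ k \<noteq> 0}"] by auto
  define a where "a k = (if k \<le> d then v $ k / v $ d else 0)" for k
  have ad: "a d = 1" using dmem unfolding a_def by simp
  have dn: "d \<le> n" using dmem by simp
  have adep: "(\<Sum>k<Suc d. a k * z k i) = 0" if "i < n" for i
  proof -
    have "(\<Sum>k<Suc n. v $ k * z k i) = (\<Sum>k<Suc d. v $ k * z k i)"
    proof -
      have "(\<Sum>k<Suc n. v $ k * z k i) = (\<Sum>k\<in>{0..<Suc d}. v $ k * z k i) + (\<Sum>k\<in>{Suc d..<Suc n}. v $ k * z k i)"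
        using sum.atLeastLessThan_concat[of 0 "Suc d" "Suc n" "\<lambda>k. v $ k * z k i"] dn
        by (simp add: lessThan_atLeast0)
      moreover have "(\<Sum>k\<in>{Suc d..<Suc n}. v $ k * z k i) = 0"
      proof (intro sum.neutral ballI)
        fix k assume k: "k \<in> {Suc d..<Suc n}"
        have "v $ k = 0"
        proof (rule ccontr)
          assume "v $ k \<noteq> 0"
          then have "k \<le> d" using dmax k by simp
          then show False using k by simp
        qed
        then show "v $ k * z k i = 0" by simp
      qed
      ultimately show ?thesis by (simp add: lessThan_atLeast0)
    qed
    then have s0: "(\<Sum>k<Suc d. v $ k * z k i) = 0" using vdep that by simp
    have "(\<Sum>k<Suc d. a k * z k i) = (\<Sum>k<Suc d. v $ k * z k i) / v $ d"
      unfolding sum_divide_distrib a_def by (intro sum.cong refl) auto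
    then show ?thesis using s0 by simp
  qed
  have shift: "(\<Sum>k<Suc d. a k * z (s+k) i) = 0" if "i < n" for s i
    using that
  proof (induction s arbitrary: i)
    case 0 then show ?case using adep by simp
  next
    case (Suc s)
    have "(\<Sum>k<Suc d. a k * z (Suc s+k) i) = (\<Sum>k<Suc d. \<Sum>q<n. a k * A $$ (q, i) * z (s+k) q)"
      using Suc.prems by (simp add: zS sum_distrib_left algebra_simps)
    also have "\<dots> = (\<Sum>q<n. \<Sum>k<Suc d. a k * A $$ (q, i) * z (s+k) q)" by (rule sum.swap)
    also have "\<dots> = (\<Sum>q<n. A $$ (q, i) * (\<Sum>k<Suc d. a k * z (s+k) q))"
      by (simp add: sum_distrib_left algebra_simps)
    also have "\<dots> = 0" using Suc.IH by simp
    finally show ?case .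
  qed
  define W where "W i p = (\<Sum>k\<in>{Suc i..n}. a k * h (k-1-i) p)" for i p
  have Wrel: "(\<Sum>i<n. \<Sum>p<m. W i p * u (j+i) $ p) = 0" if j: "j \<le> T - n" for j
  proof -
    have xj: "x j \<in> carrier_vec n" using x j nT by simp
    have "0 = (\<Sum>k<Suc n. a k * (\<xi> \<bullet> x (j+k)))"
      using orth j nT by (intro sum.neutral[symmetric] ballI) auto
    also have "\<dots> = (\<Sum>k<Suc n. a k * (\<Sum>i<n. z k i * x j $ i)) + (\<Sum>k<Suc n. a k * (\<Sum>i<k. \<Sum>p<m. h (k-1-i) p * u (j+i) $ p))"
      using L1 j nT by (simp add: distrib_left sum.distrib)
    also have "(\<Sum>k<Suc n. a k * (\<Sum>i<n. z k i * x j $ i)) = 0"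
    proof -
      have "(\<Sum>k<Suc n. a k * (\<Sum>i<n. z k i * x j $ i)) = (\<Sum>k<Suc n. \<Sum>i<n. a k * z k i * x j $ i)"
        by (simp add: sum_distrib_left mult.assoc)
      also have "\<dots> = (\<Sum>i<n. \<Sum>k<Suc n. a k * z k i * x j $ i)" by (rule sum.swap)
      also have "\<dots> = (\<Sum>i<n. (\<Sum>k<Suc n. a k * z k i) * x j $ i)"
        by (simp only: sum_distrib_right)
      also have "\<dots> = 0"
      proof (intro sum.neutral ballI)
        fix i assume i: "i \<in> {..<n}"
        have "(\<Sum>k<Suc n. a k * z k i) = (\<Sum>k\<in>{0..<Suc d}. a k * z k i) + (\<Sum>k\<in>{Suc d..<Suc n}. a k * z k i)"
          using sum.atLeastLessThan_concat[of 0 "Suc d" "Suc n" "\<lambda>k. a k * z k i"] dn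
          by (simp add: lessThan_atLeast0)
        also have "(\<Sum>k\<in>{Suc d..<Suc n}. a k * z k i) = 0"
          by (intro sum.neutral ballI) (simp add: a_def)
        also have "(\<Sum>k\<in>{0..<Suc d}. a k * z k i) = 0" using adep i by (simp add: lessThan_atLeast0)
        finally show "(\<Sum>k<Suc n. a k * z k i) * x j $ i = 0" by simp
      qed
      finally show ?thesis .
    qed
    also have "(\<Sum>k<Suc n. a k * (\<Sum>i<k. \<Sum>p<m. h (k-1-i) p * u (j+i) $ p)) = (\<Sum>k<Suc n. \<Sum>i<k. a k * (\<Sum>p<m. h (k-1-i) p * u (j+i) $ p))"
      by (simp add: sum_distrib_left)
    also have "\<dots> = (\<Sum>i<n. \<Sum>k\<in>{Suc i..n}. a k * (\<Sum>p<m. h (k-1-i) p * u (j+i) $ p))"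
      by (rule sum_triangle_swap)
    also have "\<dots> = (\<Sum>i<n. \<Sum>p<m. W i p * u (j+i) $ p)"
    proof (rule sum.cong[OF refl])
      fix i
      have "(\<Sum>k\<in>{Suc i..n}. a k * (\<Sum>p<m. h (k-1-i) p * u (j+i) $ p)) = (\<Sum>k\<in>{Suc i..n}. \<Sum>p<m. a k * h (k-1-i) p * u (j+i) $ p)"
        by (simp add: sum_distrib_left mult.assoc)
      also have "\<dots> = (\<Sum>p<m. \<Sum>k\<in>{Suc i..n}. a k * h (k-1-i) p * u (j+i) $ p)" by (rule sum.swap)
      also have "\<dots> = (\<Sum>p<m. W i p * u (j+i) $ p)" unfolding W_def by (simp add: sum_distrib_right)
      finally show "(\<Sum>k\<in>{Suc i..n}. a k * (\<Sum>p<m. h (k-1-i) p * u (j+i) $ p)) = (\<Sum>p<m. W i p * u (j+i) $ p)" .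
    qed
    finally show ?thesis by simp
  qed
  have W0: "W i p = 0" if "i < n" "p < m" for i p
  proof -
    define \<eta> where "\<eta> = vec (m*n) (\<lambda>i'. W (i' div m) (i' mod m))"
    have \<eta>c: "\<eta> \<in> carrier_vec (m*n)" unfolding \<eta>_def by simp
    have "(\<Sum>i'<m*n. \<eta> $ i' * u (i' div m + j) $ (i' mod m)) = 0" if "j \<le> T - n" for j
    proof -
      have "(\<Sum>i'<m*n. \<eta> $ i' * u (i' div m + j) $ (i' mod m)) = (\<Sum>i'<m*n. W (i' div m) (i' mod m) * u (j + i' div m) $ (i' mod m))"
        unfolding \<eta>_def by (intro sum.cong refl) (simp add: add.commute)
      also have "\<dots> = (\<Sum>i<n. \<Sum>p<m. W i p * u (j+i) $ p)"
        by (rule sum_div_mod_reindex[of "\<lambda>i p. W i p * u (j+i) $ p"])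
      finally show ?thesis using Wrel that by simp
    qed
    then have "\<eta> = 0\<^sub>v (m*n)" using peK \<eta>c by blast
    moreover have idx: "i*m + p < m*n"
    proof -
      have "i*m + p < i*m + m" using that by simp
      also have "\<dots> = Suc i * m" by simp
      also have "\<dots> \<le> n*m" using that by (intro mult_right_mono) auto
      finally show ?thesis by (simp add: mult.commute)
    qed
    ultimately have "\<eta> $ (i*m+p) = 0" by simp
    moreover have "(i*m+p) div m = i" "(i*m+p) mod m = p" using that by auto
    ultimately show ?thesis unfolding \<eta>_def using idx by simp
  qed
  have h0: "\<forall>p<m. h l p = 0" for l
  proof (induction l rule: less_induct)
    case (less l)
    show ?case
    proof (intro allI impI)
      fix p assume p: "p < m"
      show "h l p = 0"
      proof (cases "l < d")
        case True
        have idx: "d - 1 - l < n" using True dn by simp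
        have "W (d-1-l) p = (\<Sum>k\<in>{Suc (d-1-l)..n}. if k = d then h l p else 0)"
          unfolding W_def
        proof (intro sum.cong refl)
          fix k assume k: "k \<in> {Suc (d-1-l)..n}"
          show "a k * h (k-1-(d-1-l)) p = (if k = d then h l p else 0)"
          proof (cases "k = d")
            case True then show ?thesis using ad \<open>l < d\<close> by simp
          next
            case False
            show ?thesis
            proof (cases "k < d")
              case True
              have "k-1-(d-1-l) < l" using True k \<open>l < d\<close> by auto
              then show ?thesis using less.IH p False by simp
            next
              case False
              then show ?thesis using \<open>k \<noteq> d\<close> by (simp add: a_def)
            qed
          qed
        qed
        also have "\<dots> = h l p" using True dn by (simp add: sum.delta')
        finally show ?thesis using W0[OF idx p] by simp
      next
        case False
        define s where "s = l - d"
        have ls: "l = s + d" using False unfolding s_def by simp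
        have zl: "z l i = - (\<Sum>k<d. a k * z (s+k) i)" if "i < n" for i
          using shift[OF that, of s] ad ls by simp
        have "h l p = (\<Sum>i<n. - (\<Sum>k<d. a k * z (s+k) i) * B $$ (i, p))"
          unfolding h_def using zl by (intro sum.cong refl) simp
        also have "\<dots> = - (\<Sum>k<d. a k * h (s+k) p)"
          unfolding h_def by (simp add: sum_distrib_left sum_distrib_right sum_negf sum.swap[of _ "{..<d}"] mult.assoc)
        also have "\<dots> = 0" proof - have "(\<Sum>k<d. a k * h (s+k) p) = 0" by (intro sum.neutral ballI) (use less.IH p ls in auto) then show ?thesis by simp qed
        finally show ?thesis .
      qed
    qed
  qed
  show "\<xi> = 0\<^sub>v n"
    using ctrl unfolding ctrb_iff[OF A B] using \<xi> ctrl_eq h0 by auto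
qed

definition Dop :: "real \<Rightarrow> (nat \<Rightarrow> real) \<Rightarrow> nat \<Rightarrow> real" where
  "Dop c f t = f (Suc t) - c * f t"

lemma Dpow_sum:
  assumes "finite S"
  shows "(Dop c ^^ k) (\<lambda>t. \<Sum>l\<in>S. f l t) = (\<lambda>t. \<Sum>l\<in>S. (Dop c ^^ k) (f l) t)"
proof (induction k)
  case 0 then show ?case by simp
next
  case (Suc k)
  have "(Dop c ^^ Suc k) (\<lambda>t. \<Sum>l\<in>S. f l t) = Dop c ((Dop c ^^ k) (\<lambda>t. \<Sum>l\<in>S. f l t))" by simp
  also have "\<dots> = Dop c (\<lambda>t. \<Sum>l\<in>S. (Dop c ^^ k) (f l) t)" using Suc by simp
  also have "\<dots> = (\<lambda>t. \<Sum>l\<in>S. (Dop c ^^ Suc k) (f l) t)"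
    by (simp add: Dop_def fun_eq_iff sum_subtractf sum_distrib_left)
  finally show ?case .
qed

lemma Dpow_add:
  "(Dop c ^^ k) (\<lambda>t. f t + g t) = (\<lambda>t. (Dop c ^^ k) f t + (Dop c ^^ k) g t)"
proof (induction k)
  case 0 then show ?case by simp
next
  case (Suc k) then show ?case by (simp add: Dop_def algebra_simps)
qed

lemma Dpow_smult:
  "(Dop c ^^ k) (\<lambda>t. a * f t) = (\<lambda>t. a * (Dop c ^^ k) f t)"
proof (induction k)
  case 0 then show ?case by simp
next
  case (Suc k) then show ?case by (simp add: Dop_def algebra_simps)
qed

lemma Dpow_local:
  assumes "\<forall>s\<le>k. f (t+s) = g (t+s)"
  shows "(Dop c ^^ k) f t = (Dop c ^^ k) g t"
  using assms
proof (induction k arbitrary: f g)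
  case 0 then show ?case by simp
next
  case (Suc k)
  have "(Dop c ^^ k) (Dop c f) t = (Dop c ^^ k) (Dop c g) t"
  proof (rule Suc.IH, intro allI impI)
    fix s assume "s \<le> k"
    then have "f (t + Suc s) = g (t + Suc s)" "f (t+s) = g (t+s)" using Suc.prems by auto
    then show "Dop c f (t+s) = Dop c g (t+s)" unfolding Dop_def by simp
  qed
  then show ?case by (simp add: funpow_Suc_right del: funpow.simps)
qed

lemma lin_help1:
  fixes A S c w y z :: real
  assumes "A = c*S + (y - c*z)" "S = z - w"
  shows "A + c*w = y"
  using assms by (simp add: algebra_simps)

lemma lin_help2:
  fixes L L0 Q E E' R T e sS s0 p :: real
  assumes "L = L0 + e*sS" "L0 = Q + E*s0" "R = Q + e*T + E'*s0" "T = sS - p*s0" "E' = E + p*e"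
  shows "L = R"
  using assms by (simp add: algebra_simps)

lemma telescope:
  fixes s :: "nat \<Rightarrow> real"
  shows "(\<Sum>i\<le>K. c^(K-i) * (s (Suc i) - c * s i)) + c^(Suc K) * s 0 = s (Suc K)"
proof (induction K)
  case 0 then show ?case by (simp add: algebra_simps)
next
  case (Suc K)
  have "(\<Sum>i\<le>Suc K. c^(Suc K-i) * (s (Suc i) - c * s i)) = c * (\<Sum>i\<le>K. c^(K-i) * (s (Suc i) - c * s i)) + (s (Suc (Suc K)) - c * s (Suc K))"
    by (simp add: sum_distrib_left Suc_diff_le mult.assoc)
  moreover have "(\<Sum>i\<le>K. c^(K-i) * (s (Suc i) - c * s i)) = s (Suc K) - c^(Suc K) * s 0"
    using Suc by simp
  ultimately have "(\<Sum>i\<le>Suc K. c^(Suc K-i) * (s (Suc i) - c * s i)) + c * (c^(Suc K) * s 0) = s (Suc (Suc K))"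
    by (rule lin_help1)
  then show ?case by (simp add: mult.assoc)
qed

definition qdiv :: "real \<Rightarrow> nat \<Rightarrow> (nat \<Rightarrow> real) \<Rightarrow> nat \<Rightarrow> real" where
  "qdiv c N e i = (\<Sum>k\<in>{Suc i..Suc N}. c^(k-1-i) * e k)"

lemma division_identity:
  fixes s e :: "nat \<Rightarrow> real"
  shows "(\<Sum>i\<le>Suc N. e i * s i) = (\<Sum>i\<le>N. qdiv c N e i * (s (Suc i) - c * s i)) + (\<Sum>i\<le>Suc N. c^i * e i) * s 0"
proof (induction N)
  case 0
  then show ?case by (simp add: qdiv_def algebra_simps)
next
  case (Suc N)
  have q: "qdiv c (Suc N) e i = qdiv c N e i + c^(Suc N - i) * e (Suc (Suc N))" if "i \<le> Suc N" for i
    using that unfolding qdiv_def by (simp add: Suc_diff_le)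
  have qN: "qdiv c N e (Suc N) = 0" unfolding qdiv_def by simp
  have "(\<Sum>i\<le>Suc N. qdiv c (Suc N) e i * (s (Suc i) - c * s i))
      = (\<Sum>i\<le>Suc N. qdiv c N e i * (s (Suc i) - c * s i)) + e (Suc (Suc N)) * (\<Sum>i\<le>Suc N. c^(Suc N - i) * (s (Suc i) - c * s i))"
  proof -
    have "(\<Sum>i\<le>Suc N. qdiv c (Suc N) e i * (s (Suc i) - c * s i))
        = (\<Sum>i\<le>Suc N. qdiv c N e i * (s (Suc i) - c * s i) + e (Suc (Suc N)) * (c^(Suc N - i) * (s (Suc i) - c * s i)))"
      by (rule sum.cong[OF refl]) (simp add: q algebra_simps)
    also have "\<dots> = (\<Sum>i\<le>Suc N. qdiv c N e i * (s (Suc i) - c * s i)) + e (Suc (Suc N)) * (\<Sum>i\<le>Suc N. c^(Suc N - i) * (s (Suc i) - c * s i))"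
      by (simp only: sum.distrib sum_distrib_left)
    finally show ?thesis .
  qed
  also have "(\<Sum>i\<le>Suc N. qdiv c N e i * (s (Suc i) - c * s i)) = (\<Sum>i\<le>N. qdiv c N e i * (s (Suc i) - c * s i))"
    using qN by simp
  finally have e1: "(\<Sum>i\<le>Suc N. qdiv c (Suc N) e i * (s (Suc i) - c * s i))
      = (\<Sum>i\<le>N. qdiv c N e i * (s (Suc i) - c * s i)) + e (Suc (Suc N)) * (\<Sum>i\<le>Suc N. c^(Suc N - i) * (s (Suc i) - c * s i))" .
  have t: "(\<Sum>i\<le>Suc N. c^(Suc N - i) * (s (Suc i) - c * s i)) = s (Suc (Suc N)) - c^(Suc (Suc N)) * s 0"
    using telescope[of c "Suc N" s] by simp
  show ?case
  proof (rule lin_help2)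
    show "(\<Sum>i\<le>Suc (Suc N). e i * s i) = (\<Sum>i\<le>Suc N. e i * s i) + e (Suc (Suc N)) * s (Suc (Suc N))"
      by simp
    show "(\<Sum>i\<le>Suc N. e i * s i) = (\<Sum>i\<le>N. qdiv c N e i * (s (Suc i) - c * s i)) + (\<Sum>i\<le>Suc N. c^i * e i) * s 0"
      by (rule Suc)
    show "(\<Sum>i\<le>Suc N. qdiv c (Suc N) e i * (s (Suc i) - c * s i)) + (\<Sum>i\<le>Suc (Suc N). c^i * e i) * s 0
      = (\<Sum>i\<le>N. qdiv c N e i * (s (Suc i) - c * s i)) + e (Suc (Suc N)) * (\<Sum>i\<le>Suc N. c^(Suc N - i) * (s (Suc i) - c * s i)) + (\<Sum>i\<le>Suc (Suc N). c^i * e i) * s 0"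
      using e1 by simp
    show "(\<Sum>i\<le>Suc N. c^(Suc N - i) * (s (Suc i) - c * s i)) = s (Suc (Suc N)) - c^(Suc (Suc N)) * s 0"
      by (rule t)
    show "(\<Sum>i\<le>Suc (Suc N). c^i * e i) = (\<Sum>i\<le>Suc N. c^i * e i) + c^(Suc (Suc N)) * e (Suc (Suc N))"
      by (simp only: sum.atMost_Suc)
  qed
qed

lemma decomp_scalar:
  fixes e :: "nat \<Rightarrow> real"
  shows "\<exists>bb. bb N = (\<Sum>i\<le>N. c^i * e i) \<and>
    (\<forall>s j. (\<Sum>i\<le>N. e i * s (j+i)) = (\<Sum>l\<le>N. (Dop c ^^ (N-l)) (\<lambda>t. bb l * s t) j))"
proof (induction N arbitrary: e)
  case 0
  show ?case by (rule exI[of _ "\<lambda>_. e 0"]) simp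
next
  case (Suc N)
  obtain bb' where bb': "\<forall>s j. (\<Sum>i\<le>N. qdiv c N e i * s (j+i)) = (\<Sum>l\<le>N. (Dop c ^^ (N-l)) (\<lambda>t. bb' l * s t) j)"
    using Suc.IH[of "qdiv c N e"] by blast
  define E where "E = (\<Sum>i\<le>Suc N. c^i * e i)"
  define bb where "bb l = (if l \<le> N then bb' l else E)" for l
  have "(\<Sum>i\<le>Suc N. e i * s (j+i)) = (\<Sum>l\<le>Suc N. (Dop c ^^ (Suc N-l)) (\<lambda>t. bb l * s t) j)" for s j
  proof -
    have "(\<Sum>i\<le>Suc N. e i * s (j+i)) = (\<Sum>i\<le>N. qdiv c N e i * (s (j + Suc i) - c * s (j+i))) + E * s j"
      using division_identity[of e "\<lambda>i. s (j+i)" N c] unfolding E_def by simp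
    also have "(\<Sum>i\<le>N. qdiv c N e i * (s (j + Suc i) - c * s (j+i))) = (\<Sum>i\<le>N. qdiv c N e i * Dop c s (j+i))"
      unfolding Dop_def by simp
    also have "\<dots> = (\<Sum>l\<le>N. (Dop c ^^ (N-l)) (\<lambda>t. bb' l * Dop c s t) j)"
      using bb' by blast
    also have "\<dots> = (\<Sum>l\<le>N. (Dop c ^^ (Suc N - l)) (\<lambda>t. bb l * s t) j)"
    proof (rule sum.cong[OF refl])
      fix l assume l: "l \<in> {..N}"
      have "(\<lambda>t. bb' l * Dop c s t) = Dop c (\<lambda>t. bb l * s t)"
        using l unfolding bb_def Dop_def by (auto simp: algebra_simps)
      moreover have "Suc N - l = Suc (N - l)" using l by simp
      ultimately show "(Dop c ^^ (N-l)) (\<lambda>t. bb' l * Dop c s t) j = (Dop c ^^ (Suc N - l)) (\<lambda>t. bb l * s t) j"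
        by (simp add: funpow_Suc_right del: funpow.simps)
    qed
    also have "E * s j = (Dop c ^^ (Suc N - Suc N)) (\<lambda>t. bb (Suc N) * s t) j"
      unfolding bb_def by simp
    finally show ?thesis by simp
  qed
  moreover have "bb (Suc N) = E" unfolding bb_def by simp
  ultimately show ?case unfolding E_def by blast
qed

lemma decomp_vec:
  fixes \<eta> :: "nat \<Rightarrow> nat \<Rightarrow> real"
  assumes n: "n \<ge> 1"
  shows "\<exists>b. (\<forall>p. b (n-1) p = (\<Sum>i<n. c^i * \<eta> i p)) \<and>
    (\<forall>(u :: nat \<Rightarrow> real vec) j. (\<Sum>i<n. \<Sum>p<m. \<eta> i p * u (j+i) $ p) =
       (\<Sum>l<n. (Dop c ^^ (n-1-l)) (\<lambda>t. \<Sum>p<m. b l p * u t $ p) j))"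
proof -
  have "\<forall>p. \<exists>bb. bb (n-1) = (\<Sum>i\<le>n-1. c^i * \<eta> i p) \<and>
    (\<forall>s j. (\<Sum>i\<le>n-1. \<eta> i p * s (j+i)) = (\<Sum>l\<le>n-1. (Dop c ^^ (n-1-l)) (\<lambda>t. bb l * s t) j))"
    by (intro allI decomp_scalar)
  from choice[OF this] obtain BB where BB0: "\<forall>p. BB p (n-1) = (\<Sum>i\<le>n-1. c^i * \<eta> i p) \<and>
    (\<forall>s j. (\<Sum>i\<le>n-1. \<eta> i p * s (j+i)) = (\<Sum>l\<le>n-1. (Dop c ^^ (n-1-l)) (\<lambda>t. BB p l * s t) j))"
    by blast
  have BB: "\<And>p. BB p (n-1) = (\<Sum>i\<le>n-1. c^i * \<eta> i p)"
    "\<And>p s j. (\<Sum>i\<le>n-1. \<eta> i p * s (j+i)) = (\<Sum>l\<le>n-1. (Dop c ^^ (n-1-l)) (\<lambda>t. BB p l * s t) j)"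
    using BB0 by blast+
  have iv: "{..n-1} = {..<n}" using n by auto
  define b where "b l p = BB p l" for l p
  have "(\<Sum>i<n. \<Sum>p<m. \<eta> i p * u (j+i) $ p) = (\<Sum>l<n. (Dop c ^^ (n-1-l)) (\<lambda>t. \<Sum>p<m. b l p * u t $ p) j)"
    for u :: "nat \<Rightarrow> real vec" and j
  proof -
    have "(\<Sum>i<n. \<Sum>p<m. \<eta> i p * u (j+i) $ p) = (\<Sum>p<m. \<Sum>i<n. \<eta> i p * u (j+i) $ p)"
      by (rule sum.swap)
    also have "\<dots> = (\<Sum>p<m. \<Sum>l<n. (Dop c ^^ (n-1-l)) (\<lambda>t. b l p * u t $ p) j)"
      using BB(2)[of _ "\<lambda>t. u t $ _"] unfolding iv b_def by simp
    also have "\<dots> = (\<Sum>l<n. \<Sum>p<m. (Dop c ^^ (n-1-l)) (\<lambda>t. b l p * u t $ p) j)"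
      by (rule sum.swap)
    also have "\<dots> = (\<Sum>l<n. (Dop c ^^ (n-1-l)) (\<lambda>t. \<Sum>p<m. b l p * u t $ p) j)"
      by (simp add: Dpow_sum)
    finally show ?thesis .
  qed
  moreover have "b (n-1) p = (\<Sum>i<n. c^i * \<eta> i p)" for p
    using BB(1) unfolding iv b_def by simp
  ultimately show ?thesis by blast
qed

lemma jordan_mult:
  fixes v :: "real vec"
  assumes v: "v \<in> carrier_vec n" and k: "k < n"
  shows "(mat n n (\<lambda>(i,j). if j = i then c else if j = Suc i then 1 else 0) *\<^sub>v v) $ k
    = c * v $ k + (if Suc k < n then v $ Suc k else 0)"
proof -
  have "(mat n n (\<lambda>(i,j). if j = i then c else if j = Suc i then 1 else 0) *\<^sub>v v) $ k
      = (\<Sum>j\<in>{0..<n}. (if j = k then c else if j = Suc k then 1 else 0) * v $ j)"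
    using v k by (simp add: scalar_prod_def)
  also have "\<dots> = (\<Sum>j\<in>{0..<n}. (if j = k then c * v $ j else 0) + (if j = Suc k then v $ j else 0))"
    by (intro sum.cong refl) auto
  also have "\<dots> = c * v $ k + (if Suc k < n then v $ Suc k else 0)"
    using k by (simp add: sum.distrib)
  finally show ?thesis .
qed

lemma rowfun_pow:
  fixes \<xi> :: "real vec" and c :: real
  assumes \<xi>: "\<xi> \<in> carrier_vec n"
  defines "Am \<equiv> mat n n (\<lambda>(i,j). if j = i then c else if j = Suc i then (1::real) else 0)"
  defines "RA \<equiv> (\<lambda>w i. c * w i + (if i = 0 then 0 else w (i-1)))"
  shows "i < n \<Longrightarrow> (\<Sum>i'<n. \<xi> $ i' * (Am ^\<^sub>m k) $$ (i', i)) = (RA ^^ k) (\<lambda>i. \<xi> $ i) i"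
proof (induction k arbitrary: i)
  case 0
  have "(\<Sum>i'<n. \<xi> $ i' * (Am ^\<^sub>m 0) $$ (i', i)) = (\<Sum>i'<n. if i' = i then \<xi> $ i' else 0)"
    using 0 unfolding Am_def by (intro sum.cong refl) auto
  also have "\<dots> = \<xi> $ i" using 0 by simp
  finally show ?case by simp
next
  case (Suc k)
  have Am: "Am \<in> carrier_mat n n" unfolding Am_def by simp
  have Ak: "Am ^\<^sub>m k \<in> carrier_mat n n" using Am by simp
  let ?r = "\<lambda>q. \<Sum>i'<n. \<xi> $ i' * (Am ^\<^sub>m k) $$ (i', q)"
  have "(\<Sum>i'<n. \<xi> $ i' * (Am ^\<^sub>m Suc k) $$ (i', i)) = (\<Sum>i'<n. \<xi> $ i' * (\<Sum>q<n. (Am ^\<^sub>m k) $$ (i', q) * Am $$ (q, i)))"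
    using Suc.prems Ak Am by (intro sum.cong refl) (auto simp: scalar_prod_def lessThan_atLeast0)
  also have "\<dots> = (\<Sum>i'<n. \<Sum>q<n. \<xi> $ i' * (Am ^\<^sub>m k) $$ (i', q) * Am $$ (q, i))"
    by (simp add: sum_distrib_left mult.assoc)
  also have "\<dots> = (\<Sum>q<n. \<Sum>i'<n. \<xi> $ i' * (Am ^\<^sub>m k) $$ (i', q) * Am $$ (q, i))"
    by (rule sum.swap)
  also have "\<dots> = (\<Sum>q<n. ?r q * Am $$ (q, i))"
    by (simp add: sum_distrib_right)
  also have "\<dots> = (\<Sum>q<n. (if q = i then c * ?r q else 0) + (if Suc q = i then ?r q else 0))"
    using Suc.prems unfolding Am_def by (intro sum.cong refl) auto
  also have "\<dots> = c * ?r i + (if i = 0 then 0 else ?r (i-1))"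
  proof -
    have "(\<Sum>q<n. (if Suc q = i then ?r q else 0)) = (if i = 0 then 0 else ?r (i-1))"
    proof (cases i)
      case 0 then show ?thesis by simp
    next
      case (Suc i0)
      then have "(\<Sum>q<n. (if Suc q = i then ?r q else 0)) = (\<Sum>q<n. (if q = i0 then ?r q else 0))"
        by (intro sum.cong refl) auto
      also have "\<dots> = ?r i0" using Suc.prems \<open>i = Suc i0\<close> by simp
      finally show ?thesis using Suc by simp
    qed
    then show ?thesis using Suc.prems by (simp add: sum.distrib)
  qed
  also have "\<dots> = (RA ^^ Suc k) (\<lambda>i. \<xi> $ i) i"
    using Suc.IH Suc.prems by (simp add: RA_def)
  finally show ?case .
qed

lemma RN_pow: "((\<lambda>w i. if i = 0 then 0 else w (i-1)) ^^ k) w i = (if k \<le> i then w (i-k) else (0::real))"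
proof (induction k arbitrary: i)
  case 0 then show ?case by simp
next
  case (Suc k) then show ?case by (cases i) auto
qed

lemma RN_pow_lin:
  fixes c :: real shows "((\<lambda>w i. if i = 0 then 0 else w (i-1)) ^^ k) (\<lambda>i. f i - c * g i) =
   (\<lambda>i. ((\<lambda>w i. if i = 0 then 0 else w (i-1)) ^^ k) f i - c * ((\<lambda>w i. if i = 0 then 0 else w (i-1)) ^^ k) g i)"
  by (induction k) (auto simp: fun_eq_iff)

lemma jordan_ctrl:
  fixes c :: real and b :: "nat \<Rightarrow> nat \<Rightarrow> real"
  assumes p0: "p0 < m" and bn: "b (n-1) p0 \<noteq> 0"
  shows "controllable n m (mat n n (\<lambda>(i,j). if j = i then c else if j = Suc i then 1 else 0))
                          (mat n m (\<lambda>(k,p). b k p))"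
proof -
  define Am where "Am = mat n n (\<lambda>(i,j). if j = i then c else if j = Suc i then (1::real) else 0)"
  define Bm where "Bm = mat n m (\<lambda>(k,p). b k p)"
  define RA where "RA = (\<lambda>(w::nat \<Rightarrow> real) i. c * w i + (if i = 0 then 0 else w (i-1)))"
  define RN where "RN = (\<lambda>(w::nat \<Rightarrow> real) i. if i = 0 then 0 else w (i-1))"
  define gB where "gB w p = (\<Sum>q<n. w q * b q p)" for w p
  have Am: "Am \<in> carrier_mat n n" and Bm: "Bm \<in> carrier_mat n m" unfolding Am_def Bm_def by auto
  have "\<xi> = 0\<^sub>v n" if \<xi>: "\<xi> \<in> carrier_vec n" and H: "\<forall>k<n. \<forall>p<m. (\<Sum>i<n. \<xi> $ i * (Am ^\<^sub>m k * Bm) $$ (i, p)) = 0" for \<xi>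
  proof -
    define \<xi>f where "\<xi>f = (\<lambda>i. \<xi> $ i)"
    have H': "gB ((RA ^^ k) \<xi>f) p = 0" if "k < n" "p < m" for k p
    proof -
      have Ak: "Am ^\<^sub>m k \<in> carrier_mat n n" using Am by simp
      have "(\<Sum>i<n. \<xi> $ i * (Am ^\<^sub>m k * Bm) $$ (i, p)) = (\<Sum>i<n. \<xi> $ i * (\<Sum>q<n. (Am ^\<^sub>m k) $$ (i, q) * Bm $$ (q, p)))"
        using that Ak Bm by (intro sum.cong refl) (auto simp: scalar_prod_def lessThan_atLeast0 carrier_matD[OF Am] carrier_matD[OF Bm])
      also have "\<dots> = (\<Sum>i<n. \<Sum>q<n. \<xi> $ i * (Am ^\<^sub>m k) $$ (i, q) * Bm $$ (q, p))"
        by (simp add: sum_distrib_left mult.assoc)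
      also have "\<dots> = (\<Sum>q<n. \<Sum>i<n. \<xi> $ i * (Am ^\<^sub>m k) $$ (i, q) * Bm $$ (q, p))"
        by (rule sum.swap)
      also have "\<dots> = (\<Sum>q<n. (\<Sum>i<n. \<xi> $ i * (Am ^\<^sub>m k) $$ (i, q)) * b q p)"
        using that unfolding Bm_def by (simp add: sum_distrib_right)
      also have "\<dots> = gB ((RA ^^ k) \<xi>f) p"
        unfolding gB_def \<xi>f_def RA_def Am_def using rowfun_pow[OF \<xi>] by simp
      finally show ?thesis using H that by simp
    qed
    have RNA: "RN w = (\<lambda>i. RA w i - c * w i)" for w unfolding RN_def RA_def by auto
    have gB_lin: "gB (\<lambda>i. f i - c * g i) p = gB f p - c * gB g p" for f g p
      unfolding gB_def by (simp add: sum_subtractf sum_distrib_left algebra_simps)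
    have P: "\<forall>j p. j + k < n \<longrightarrow> p < m \<longrightarrow> gB ((RN ^^ k) ((RA ^^ j) \<xi>f)) p = 0" for k
    proof (induction k)
      case 0 then show ?case using H' by simp
    next
      case (Suc k)
      show ?case
      proof (intro allI impI)
        fix j p assume jk: "j + Suc k < n" and p: "p < m"
        have "(RN ^^ Suc k) ((RA ^^ j) \<xi>f) = (RN ^^ k) (RN ((RA ^^ j) \<xi>f))"
          by (simp only: funpow_Suc_right o_apply)
        also have "\<dots> = (RN ^^ k) (\<lambda>i. (RA ^^ Suc j) \<xi>f i - c * (RA ^^ j) \<xi>f i)"
          by (simp add: RNA)
        also have "\<dots> = (\<lambda>i. (RN ^^ k) ((RA ^^ Suc j) \<xi>f) i - c * (RN ^^ k) ((RA ^^ j) \<xi>f) i)"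
          unfolding RN_def by (rule RN_pow_lin)
        finally have e: "(RN ^^ Suc k) ((RA ^^ j) \<xi>f) = \<dots>" .
        have z1: "gB ((RN ^^ k) ((RA ^^ Suc j) \<xi>f)) p = 0" using Suc.IH[rule_format, of "Suc j" p] jk p by simp
        have z2: "gB ((RN ^^ k) ((RA ^^ j) \<xi>f)) p = 0" using Suc.IH jk p by auto
        show "gB ((RN ^^ Suc k) ((RA ^^ j) \<xi>f)) p = 0"
          unfolding e gB_lin z1 z2 by simp
      qed
    qed
    have Z: "(\<Sum>q<n. (if k \<le> q then \<xi> $ (q-k) else 0) * b q p0) = 0" if "k < n" for k
    proof -
      have e0: "(RA ^^ 0) \<xi>f = \<xi>f" by simp
      have "gB ((RN ^^ k) \<xi>f) p0 = 0" using P[of k, rule_format, of 0 p0] that p0 unfolding e0 by simp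
      then show ?thesis unfolding gB_def RN_def RN_pow \<xi>f_def .
    qed
    have "\<xi> $ i = 0" if "i < n" for i
      using that
    proof (induction i rule: less_induct)
      case (less i)
      have "(\<Sum>q<n. (if n-1-i \<le> q then \<xi> $ (q-(n-1-i)) else 0) * b q p0) = (\<Sum>q<n. if q = n-1 then \<xi> $ i * b (n-1) p0 else 0)"
      proof (intro sum.cong refl)
        fix q assume q: "q \<in> {..<n}"
        show "(if n-1-i \<le> q then \<xi> $ (q-(n-1-i)) else 0) * b q p0 = (if q = n-1 then \<xi> $ i * b (n-1) p0 else 0)"
        proof (cases "q = n-1")
          case True then show ?thesis using less.prems by simp
        next
          case False
          show ?thesis
          proof (cases "n-1-i \<le> q")
            case True
            have "q - (n-1-i) < i" using True False q less.prems by auto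
            then show ?thesis using less.IH less.prems False by simp
          qed (use False in simp)
        qed
      qed
      also have "\<dots> = \<xi> $ i * b (n-1) p0" using less.prems by simp
      finally show ?case using Z[of "n-1-i"] less.prems bn by simp
    qed
    then show ?thesis using \<xi> by (intro eq_vecI) auto
  qed
  note K = this
  have K2: "\<forall>\<xi>\<in>carrier_vec n. (\<forall>k<n. \<forall>p<m. (\<Sum>i<n. \<xi> $ i * (Am ^\<^sub>m k * Bm) $$ (i, p)) = 0) \<longrightarrow> \<xi> = 0\<^sub>v n"
    using K by blast
  have "controllable n m Am Bm" using ctrb_iff[OF Am Bm] K2 by (rule iffD2)
  then show ?thesis unfolding Am_def Bm_def by assumption
qed

lemma Dop_add: "Dop c (\<lambda>t. f t + g t) t = Dop c f t + Dop c g t"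
  unfolding Dop_def by (simp add: algebra_simps)

lemma Dop_sum: "Dop c (\<lambda>t. \<Sum>l\<in>S. F l t) t = (\<Sum>l\<in>S. Dop c (F l) t)"
  unfolding Dop_def by (simp add: sum_subtractf sum_distrib_left)

lemma construct:
  fixes c :: real and b :: "nat \<Rightarrow> nat \<Rightarrow> real" and u :: "nat \<Rightarrow> real vec"
  assumes n1: "n \<ge> 1" and p0: "p0 < m" and bn: "b (n-1) p0 \<noteq> 0"
    and H: "\<forall>t. t + n \<le> T \<longrightarrow> (\<Sum>l<n. (Dop c ^^ (n-1-l)) (\<lambda>t. (mat n m (\<lambda>(k,p). b k p) *\<^sub>v u t) $ l) t) = 0"
  shows "\<exists>A B x. A \<in> carrier_mat n n \<and> B \<in> carrier_mat n m \<and> controllable n m A B \<and>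
    (\<forall>t\<le>T. x t \<in> carrier_vec n) \<and> (\<forall>t<T. x (Suc t) = A *\<^sub>v x t + B *\<^sub>v u t) \<and>
    \<not> full_row_rank (hankel n 1 (T+1) x)"
proof -
  define Am where "Am = mat n n (\<lambda>(i,j). if j = i then c else if j = Suc i then (1::real) else 0)"
  define Bm where "Bm = mat n m (\<lambda>(k,p). b k p)"
  have Am: "Am \<in> carrier_mat n n" and Bm: "Bm \<in> carrier_mat n m" unfolding Am_def Bm_def by auto
  define \<sigma> where "\<sigma> l t = (Bm *\<^sub>v u t) $ l" for l t
  define x0 where "x0 = vec n (\<lambda>j. - (\<Sum>l<j. (Dop c ^^ (j-1-l)) (\<sigma> l) 0))"
  define x where "x = rec_nat x0 (\<lambda>t xt. Am *\<^sub>v xt + Bm *\<^sub>v u t)"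
  have x0': "x 0 = x0" by (simp add: x_def)
  have xS: "x (Suc t) = Am *\<^sub>v x t + Bm *\<^sub>v u t" for t by (simp add: x_def)
  have xc: "x t \<in> carrier_vec n" for t
  proof (cases t)
    case 0
    have "x 0 \<in> carrier_vec n" unfolding x0' x0_def by (rule vec_carrier)
    then show ?thesis using 0 by simp
  next
    case (Suc t')
    have "dim_vec (x (Suc t')) = n" unfolding xS Bm_def by (simp only: index_add_vec(2) dim_mult_mat_vec dim_row_mat(1))
    then show ?thesis unfolding Suc by (rule carrier_vecI)
  qed
  define X where "X k t = (if k < n then x t $ k else 0)" for k t
  have DX: "Dop c (X k) t = X (Suc k) t + \<sigma> k t" if k: "k < n" for k t
  proof -
    have "x (Suc t) $ k = (Am *\<^sub>v x t) $ k + \<sigma> k t"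
      unfolding xS \<sigma>_def using k by (simp add: Bm_def)
    also have "(Am *\<^sub>v x t) $ k = c * x t $ k + (if Suc k < n then x t $ Suc k else 0)"
      unfolding Am_def by (rule jordan_mult[OF xc k])
    finally show ?thesis unfolding Dop_def X_def using k by simp
  qed
  define g where "g j = (Dop c ^^ j) (X 0)" for j
  have gform: "g j t = X j t + (\<Sum>l<j. (Dop c ^^ (j-1-l)) (\<sigma> l) t)" if "j \<le> n" for j t
    using that
  proof (induction j arbitrary: t)
    case 0 then show ?case by (simp add: g_def)
  next
    case (Suc j)
    have jn: "j < n" using Suc.prems by simp
    have gj: "g j = (\<lambda>t. X j t + (\<Sum>l<j. (Dop c ^^ (j-1-l)) (\<sigma> l) t))"
      using Suc.IH jn by (auto simp: fun_eq_iff)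
    have "g (Suc j) t = Dop c (g j) t" unfolding g_def by simp
    also have "\<dots> = Dop c (X j) t + (\<Sum>l<j. Dop c ((Dop c ^^ (j-1-l)) (\<sigma> l)) t)"
      unfolding gj Dop_add Dop_sum ..
    also have "(\<Sum>l<j. Dop c ((Dop c ^^ (j-1-l)) (\<sigma> l)) t) = (\<Sum>l<j. (Dop c ^^ (Suc j-1-l)) (\<sigma> l) t)"
    proof (rule sum.cong[OF refl])
      fix l assume "l \<in> {..<j}"
      then have "Suc j - 1 - l = Suc (j-1-l)" by auto
      then show "Dop c ((Dop c ^^ (j-1-l)) (\<sigma> l)) t = (Dop c ^^ (Suc j-1-l)) (\<sigma> l) t" by simp
    qed
    also have "Dop c (X j) t = X (Suc j) t + \<sigma> j t" by (rule DX[OF jn])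
    finally show ?case by simp
  qed
  have g0: "g j 0 = 0" if "j < n" for j
    using gform[of j 0] that unfolding X_def by (simp add: x0' x0_def)
  have gn: "g n t = 0" if "t + n \<le> T" for t
  proof -
    have \<sigma>eq: "\<sigma> l = (\<lambda>t. (mat n m (\<lambda>(k,p). b k p) *\<^sub>v u t) $ l)" for l
      by (simp add: \<sigma>_def Bm_def fun_eq_iff)
    have "(\<Sum>l<n. (Dop c ^^ (n-1-l)) (\<sigma> l) t) = 0"
      unfolding \<sigma>eq using H that by simp
    then show ?thesis using gform[of n t] unfolding X_def by simp
  qed
  have gS: "g j (Suc t) = g (Suc j) t + c * g j t" for j t
    unfolding g_def by (simp add: Dop_def)
  have gz: "\<forall>t. t + (n - i) \<le> T \<longrightarrow> g (n - i) t = 0" if "i \<le> n" for i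
    using that
  proof (induction i)
    case 0 then show ?case using gn by simp
  next
    case (Suc i)
    define j where "j = n - Suc i"
    have jn: "j < n" and jS: "Suc j = n - i" using Suc.prems unfolding j_def by auto
    have IH: "\<forall>t. t + Suc j \<le> T \<longrightarrow> g (Suc j) t = 0" using Suc.IH Suc.prems jS by simp
    have "t + j \<le> T \<longrightarrow> g j t = 0" for t
    proof (induction t)
      case 0 then show ?case using g0 jn by simp
    next
      case (Suc t)
      then show ?case using IH gS[of j t] by simp
    qed
    then show ?case unfolding j_def by blast
  qed
  have x0z: "x t $ 0 = 0" if "t \<le> T" for t
  proof -
    have "g 0 t = 0" using gz[of n] that by simp
    then show ?thesis unfolding g_def X_def using n1 by simp
  qed
  have nfr: "\<not> full_row_rank (hankel n 1 (T+1) x)"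
  proof -
    have "unit_vec n 0 \<in> carrier_vec n" "unit_vec n 0 \<noteq> 0\<^sub>v n" using n1 by auto
    moreover have "\<forall>t\<le>T. unit_vec n 0 \<bullet> x t = 0" using x0z xc n1 by simp
    moreover have xc': "\<forall>t\<le>T. x t \<in> carrier_vec n" using xc by simp
    ultimately show ?thesis unfolding hankel_x_rank[OF xc'] by auto
  qed
  have ctrl: "controllable n m Am Bm"
    unfolding Am_def Bm_def by (rule jordan_ctrl[of p0 m b n c, OF p0 bn])
  show ?thesis
    by (rule exI[of _ Am], rule exI[of _ Bm], rule exI[of _ x]) (use Am Bm ctrl xc xS nfr in simp)
qed

lemma exists_nonroot:
  fixes e :: "nat \<Rightarrow> real"
  assumes "i0 < n" "e i0 \<noteq> 0"
  shows "\<exists>c. (\<Sum>i<n. c^i * e i) \<noteq> 0"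
proof -
  define P where "P = (\<Sum>i<n. monom (e i) i)"
  have "coeff P i0 = e i0" unfolding P_def coeff_sum using assms(1) by simp
  then have "P \<noteq> 0" using assms(2) by auto
  then obtain c where "poly P c \<noteq> 0" using poly_all_0_iff_0 by blast
  moreover have "poly P c = (\<Sum>i<n. c^i * e i)" unfolding P_def poly_sum poly_monom by (simp add: mult.commute)
  ultimately show ?thesis by auto
qed

lemma backward:
  fixes n m T :: nat and u :: "nat \<Rightarrow> real vec"
  assumes m_pos: "m \<ge> 1"
    and u_dim: "\<forall>t \<le> T. u t \<in> carrier_vec m"
    and Hi: "\<forall>A B x. A \<in> carrier_mat n n \<longrightarrow> B \<in> carrier_mat n m \<longrightarrow> controllable n m A B \<longrightarrow>
            (\<forall>t \<le> T. x t \<in> carrier_vec n) \<longrightarrow>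
            (\<forall>t < T. x (Suc t) = A *\<^sub>v x t + B *\<^sub>v u t) \<longrightarrow>
            full_row_rank (hankel n 1 (T + 1) x)"
  shows "persistently_exciting m T u n"
proof (rule ccontr)
  assume nPE: "\<not> persistently_exciting m T u n"
  have n1: "n \<ge> 1"
  proof (rule ccontr)
    assume "\<not> n \<ge> 1"
    then have n0: "n = 0" by simp
    have "\<forall>\<eta>\<in>carrier_vec (m*n). \<eta> = 0\<^sub>v (m*n)" using n0 by (auto intro!: eq_vecI)
    then have "persistently_exciting m T u n" unfolding pe_iff using n0 by auto
    then show False using nPE by simp
  qed
  obtain c b p0 where p0: "p0 < m" and bn: "b (n-1) p0 \<noteq> (0::real)"
    and H: "\<forall>t. t + n \<le> T \<longrightarrow> (\<Sum>l<n. (Dop c ^^ (n-1-l)) (\<lambda>t. (mat n m (\<lambda>(k,p). b k p) *\<^sub>v u t) $ l) t) = 0"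
  proof (cases "n \<le> T")
    case False
    show ?thesis
      by (rule that[of 0 "\<lambda>l p. if l = n-1 \<and> p = 0 then 1 else 0" 0]) (use m_pos False in auto)
  next
    case True
    then obtain \<eta> where \<eta>c: "\<eta> \<in> carrier_vec (m*n)" and \<eta>0: "\<eta> \<noteq> 0\<^sub>v (m*n)"
      and \<eta>rel: "\<forall>j\<le>T-n. (\<Sum>i<m*n. \<eta> $ i * u (i div m + j) $ (i mod m)) = 0"
      using nPE unfolding pe_iff by auto
    define \<eta>f where "\<eta>f i p = \<eta> $ (i*m + p)" for i p
    have mp: "m > 0" using m_pos by simp
    have \<eta>eq: "\<eta> $ i = \<eta>f (i div m) (i mod m)" for i unfolding \<eta>f_def by simp
    have rel: "(\<Sum>i<n. \<Sum>p<m. \<eta>f i p * u (j+i) $ p) = 0" if "j \<le> T - n" for j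
    proof -
      have "(\<Sum>i<n. \<Sum>p<m. \<eta>f i p * u (j+i) $ p) = (\<Sum>i'<m*n. \<eta>f (i' div m) (i' mod m) * u (j + i' div m) $ (i' mod m))"
        by (rule sum_div_mod_reindex[of "\<lambda>i p. \<eta>f i p * u (j+i) $ p", symmetric])
      also have "\<dots> = (\<Sum>i<m*n. \<eta> $ i * u (i div m + j) $ (i mod m))"
        by (simp add: \<eta>eq add.commute)
      finally show ?thesis using \<eta>rel that by simp
    qed
    obtain i' where i': "i' < m*n" "\<eta> $ i' \<noteq> 0"
    proof (rule ccontr)
      assume "\<not> thesis"
      then have "\<forall>i'<m*n. \<eta> $ i' = 0" using that by blast
      then have "\<eta> = 0\<^sub>v (m*n)" using \<eta>c by (intro eq_vecI) auto
      then show False using \<eta>0 by simp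
    qed
    define i0 where "i0 = i' div m"
    define q0 where "q0 = i' mod m"
    have i0: "i0 < n" unfolding i0_def using i'(1) mp by (simp add: div_less_iff_less_mult mult.commute)
    have q0: "q0 < m" unfolding q0_def using mp by simp
    have nz: "\<eta>f i0 q0 \<noteq> 0" using i'(2) unfolding i0_def q0_def \<eta>eq by simp
    obtain c where c: "(\<Sum>i<n. c^i * \<eta>f i q0) \<noteq> 0"
      using exists_nonroot[of i0 n "\<lambda>i. \<eta>f i q0"] i0 nz by blast
    obtain b where bdef: "\<forall>p. b (n-1) p = (\<Sum>i<n. c^i * \<eta>f i p)"
      and brel: "\<forall>(u :: nat \<Rightarrow> real vec) j. (\<Sum>i<n. \<Sum>p<m. \<eta>f i p * u (j+i) $ p) =
       (\<Sum>l<n. (Dop c ^^ (n-1-l)) (\<lambda>t. \<Sum>p<m. b l p * u t $ p) j)"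
      using decomp_vec[OF n1, of c \<eta>f m] by blast
    have Hc: "(\<Sum>l<n. (Dop c ^^ (n-1-l)) (\<lambda>t. (mat n m (\<lambda>(k,p). b k p) *\<^sub>v u t) $ l) t) = 0"
      if t: "t + n \<le> T" for t
    proof -
      have "(\<Sum>l<n. (Dop c ^^ (n-1-l)) (\<lambda>t. (mat n m (\<lambda>(k,p). b k p) *\<^sub>v u t) $ l) t)
          = (\<Sum>l<n. (Dop c ^^ (n-1-l)) (\<lambda>t. \<Sum>p<m. b l p * u t $ p) t)"
      proof (rule sum.cong[OF refl])
        fix l assume l: "l \<in> {..<n}"
        show "(Dop c ^^ (n-1-l)) (\<lambda>t. (mat n m (\<lambda>(k,p). b k p) *\<^sub>v u t) $ l) t = (Dop c ^^ (n-1-l)) (\<lambda>t. \<Sum>p<m. b l p * u t $ p) t"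
        proof (rule Dpow_local, intro allI impI)
          fix s assume s: "s \<le> n-1-l"
          have uc: "u (t+s) \<in> carrier_vec m" using u_dim t s l by auto
          show "(mat n m (\<lambda>(k,p). b k p) *\<^sub>v u (t+s)) $ l = (\<Sum>p<m. b l p * u (t+s) $ p)"
            using l uc by (auto simp: scalar_prod_def lessThan_atLeast0 mult.commute intro!: sum.cong)
        qed
      qed
      also have "\<dots> = (\<Sum>i<n. \<Sum>p<m. \<eta>f i p * u (t+i) $ p)" using brel by simp
      also have "\<dots> = 0" using rel t by simp
      finally show ?thesis .
    qed
    show ?thesis
      by (rule that[of q0 b c]) (use q0 bdef c Hc in auto)
  qed
  obtain A B x where ABx: "A \<in> carrier_mat n n" "B \<in> carrier_mat n m" "controllable n m A B"
    "\<forall>t\<le>T. x t \<in> carrier_vec n" "\<forall>t<T. x (Suc t) = A *\<^sub>v x t + B *\<^sub>v u t"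
    "\<not> full_row_rank (hankel n 1 (T+1) x)"
    using construct[OF n1 p0 bn H] by blast
  then show False using Hi by blast
qed

theorem corollary1:
  fixes n m T :: nat and u :: "nat \<Rightarrow> real vec"
  assumes m_pos: "m \<ge> 1"
    and u_dim: "\<forall>t \<le> T. u t \<in> carrier_vec m"
  shows "(\<forall>A B x. A \<in> carrier_mat n n \<longrightarrow> B \<in> carrier_mat n m \<longrightarrow> controllable n m A B \<longrightarrow>
            (\<forall>t \<le> T. x t \<in> carrier_vec n) \<longrightarrow>
            (\<forall>t < T. x (Suc t) = A *\<^sub>v x t + B *\<^sub>v u t) \<longrightarrow>
            full_row_rank (hankel n 1 (T + 1) x))
         \<longleftrightarrow> persistently_exciting m T u n"
proof
  assume "\<forall>A B x. A \<in> carrier_mat n n \<longrightarrow> B \<in> carrier_mat n m \<longrightarrow> controllable n m A B \<longrightarrow>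
            (\<forall>t \<le> T. x t \<in> carrier_vec n) \<longrightarrow>
            (\<forall>t < T. x (Suc t) = A *\<^sub>v x t + B *\<^sub>v u t) \<longrightarrow>
            full_row_rank (hankel n 1 (T + 1) x)"
  then show "persistently_exciting m T u n" using backward[OF m_pos u_dim] by blast
next
  assume pe: "persistently_exciting m T u n"
  show "\<forall>A B x. A \<in> carrier_mat n n \<longrightarrow> B \<in> carrier_mat n m \<longrightarrow> controllable n m A B \<longrightarrow>
            (\<forall>t \<le> T. x t \<in> carrier_vec n) \<longrightarrow>
            (\<forall>t < T. x (Suc t) = A *\<^sub>v x t + B *\<^sub>v u t) \<longrightarrow>
            full_row_rank (hankel n 1 (T + 1) x)"
    using forward[OF _ _ _ _ _ u_dim pe] by blast
qed

end
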